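(* Consider the multiobjective composite problem $\min_{x\in\mathbb{R}^n} F(x)$ with $F=(F_1,\dots,F_m)$, $F_i=f_i+g_i$, where each $f_i:\mathbb{R}^n\to\mathbb{R}$ is twice continuously differentiable and each $g_i$ is proper, convex and lower semicontinuous. Suppose each $f_i$, $i\in[m]$, is $\mu$-strongly convex for some $\mu>0$. Let $\{x^k\}$ be the (infinite) sequence generated by the Newton-type proximal gradient method described in the context. Then $\{x^k\}$ converges to some Pareto solution $x^*$ of the problem.
   Context: Notation: $[m]=\{1,\dots,m\}$. For $u,v\in\mathbb{R}^m$, $u\preceq v$ means $v-u\in\mathbb{R}^m_+$ and $u\prec v$ means $v-u\in\mathbb{R}^m_{++}$. A point $x^*$ is a Pareto solution if there is no $x$ with $F(x)\preceq F(x^* )$ and $F(x)\neq F(x^* )$. A twice continuously differentiable $h$ is $\mu$-strongly convex if $\mu I\preceq \nabla^2 h(x)$ (in the positive semidefinite order) for all $x$. Newton-type proximal gradient method: for $x\in\mathbb{R}^n$ let $d(x)=\arg\min_{d\in\mathbb{R}^n}\max_{i\in[m]}\{\langle\nabla f_i(x),d\rangle+g_i(x+d)-g_i(x)+\tfrac12\langle d,\nabla^2 f_i(x)d\rangle\}$ and let $\theta(x)$ be the optimal value of this problem. Given $x^0\in\mathbb{R}^n$ and parameters $\sigma,\gamma\in(0,1)$, at iteration $k$ compute $d^k=d(x^k)$, $\theta^k=\theta(x^k)$, choose the stepsize $t_k\in(0,1]$ as the largest element of $\{\gamma^j: j\in\mathbb{N},\ F_i(x^k+\gamma^j d^k)-F_i(x^k)\le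 \gamma^j\sigma\theta^k \text{ for all } i\in[m]\}$, and set $x^{k+1}=x^k+t_kd^k$. Standing assumption: the method generates an infinite sequence of points that are not Pareto critical (i.e. $d^k\neq 0$ for all $k$, the method never stops). *)

theory Defs
  imports "HOL-Analysis.Analysis"
begin

definition proper_fun :: "('a \<Rightarrow> ereal) \<Rightarrow> bool" where
  "proper_fun g \<longleftrightarrow> (\<forall>x. g x \<noteq> -\<infinity>) \<and> (\<exists>x. g x \<noteq> \<infinity>)"

definition ereal_convex_fun :: "('a::real_vector \<Rightarrow> ereal) \<Rightarrow> bool" where
  "ereal_convex_fun g \<longleftrightarrow>
     (\<forall>x y t. 0 < t \<and> t < 1 \<longrightarrow>
        g ((1 - t) *\<^sub>R x + t *\<^sub>R y) \<le> ereal (1 - t) * g x + ereal t * g y)"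

definition lsc_fun :: "('a::topological_space \<Rightarrow> ereal) \<Rightarrow> bool" where
  "lsc_fun g \<longleftrightarrow> (\<forall>x. g x \<le> Liminf (at x) g)"

definition newton_subobj ::
  "nat \<Rightarrow> (nat \<Rightarrow> real^'n \<Rightarrow> real^'n) \<Rightarrow> (nat \<Rightarrow> real^'n \<Rightarrow> real^'n^'n)
     \<Rightarrow> (nat \<Rightarrow> real^'n \<Rightarrow> ereal) \<Rightarrow> real^'n \<Rightarrow> real^'n \<Rightarrow> ereal" where
  "newton_subobj m Df H g x d =
     Max ((\<lambda>i. ereal (Df i x \<bullet> d) + g i (x + d) - g i x + ereal (d \<bullet> (H i x *v d) / 2)) ` {1..m})"

definition pareto_solution ::
  "nat \<Rightarrow> (nat \<Rightarrow> 'a \<Rightarrow> ereal) \<Rightarrow> 'a \<Rightarrow> bool" where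
  "pareto_solution m F xs \<longleftrightarrow>
     \<not> (\<exists>x. (\<forall>i\<in>{1..m}. F i x \<le> F i xs) \<and> (\<exists>i\<in>{1..m}. F i x \<noteq> F i xs))"

end

theory Submission
  imports Defs
begin


lemma taylor_lo_1d:
  fixes p p1 p2 :: "real \<Rightarrow> real" and a b :: real
  assumes d1: "\<And>s. s \<in> {0..1} \<Longrightarrow> (p has_real_derivative p1 s) (at s)"
    and d2: "\<And>s. s \<in> {0..1} \<Longrightarrow> (p1 has_real_derivative p2 s) (at s)"
    and lo: "\<And>s. s \<in> {0..1} \<Longrightarrow> a \<le> p2 s"
  shows "p 0 + p1 0 + a / 2 \<le> p 1"
proof -
  have h1: "\<And>s. 0 \<le> s \<Longrightarrow> s \<le> 1 \<Longrightarrow> 0 \<le> p1 s - p1 0 - a * s"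
  proof -
    fix s :: real assume s: "0 \<le> s" "s \<le> 1"
    have "(\<lambda>u. p1 u - p1 0 - a * u) 0 \<le> (\<lambda>u. p1 u - p1 0 - a * u) s"
    proof (rule DERIV_nonneg_imp_nondecreasing[OF s(1), where f="\<lambda>u. p1 u - p1 0 - a * u"])
      fix u assume u: "0 \<le> u" "u \<le> s"
      show "\<exists>y. ((\<lambda>u. p1 u - p1 0 - a * u) has_real_derivative y) (at u) \<and> 0 \<le> y"
        using u s by (intro exI[of _ "p2 u - a"]) (auto intro!: derivative_eq_intros d2 simp: lo)
    qed
    then show "0 \<le> p1 s - p1 0 - a * s" by simp
  qed
  have "(\<lambda>u. p u - p 0 - p1 0 * u - a / 2 * u^2) 0 \<le> (\<lambda>u. p u - p 0 - p1 0 * u - a / 2 * u^2) 1"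
  proof (rule DERIV_nonneg_imp_nondecreasing[where f="\<lambda>u. p u - p 0 - p1 0 * u - a / 2 * u^2"])
    fix u :: real assume u: "0 \<le> u" "u \<le> 1"
    show "\<exists>y. ((\<lambda>u. p u - p 0 - p1 0 * u - a / 2 * u^2) has_real_derivative y) (at u) \<and> 0 \<le> y"
      using u h1[OF u] by (intro exI[of _ "p1 u - p1 0 - a * u"]) (auto intro!: derivative_eq_intros d1)
  qed simp
  then show "p 0 + p1 0 + a / 2 \<le> p 1" by simp
qed

lemma taylor_hi_1d:
  fixes p p1 p2 :: "real \<Rightarrow> real" and a b :: real
  assumes d1: "\<And>s. s \<in> {0..1} \<Longrightarrow> (p has_real_derivative p1 s) (at s)"
    and d2: "\<And>s. s \<in> {0..1} \<Longrightarrow> (p1 has_real_derivative p2 s) (at s)"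
    and hi: "\<And>s. s \<in> {0..1} \<Longrightarrow> p2 s \<le> b"
  shows "p 1 \<le> p 0 + p1 0 + b / 2"
proof -
  have h2: "\<And>s. 0 \<le> s \<Longrightarrow> s \<le> 1 \<Longrightarrow> 0 \<le> b * s - (p1 s - p1 0)"
  proof -
    fix s :: real assume s: "0 \<le> s" "s \<le> 1"
    have "(\<lambda>u. b * u - (p1 u - p1 0)) 0 \<le> (\<lambda>u. b * u - (p1 u - p1 0)) s"
    proof (rule DERIV_nonneg_imp_nondecreasing[OF s(1), where f="\<lambda>u. b * u - (p1 u - p1 0)"])
      fix u assume u: "0 \<le> u" "u \<le> s"
      show "\<exists>y. ((\<lambda>u. b * u - (p1 u - p1 0)) has_real_derivative y) (at u) \<and> 0 \<le> y"
        using u s by (intro exI[of _ "b - p2 u"]) (auto intro!: derivative_eq_intros d2 simp: hi)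
    qed
    then show "0 \<le> b * s - (p1 s - p1 0)" by simp
  qed
  have "(\<lambda>u. b / 2 * u^2 - (p u - p 0 - p1 0 * u)) 0 \<le> (\<lambda>u. b / 2 * u^2 - (p u - p 0 - p1 0 * u)) 1"
  proof (rule DERIV_nonneg_imp_nondecreasing[where f="\<lambda>u. b / 2 * u^2 - (p u - p 0 - p1 0 * u)"])
    fix u :: real assume u: "0 \<le> u" "u \<le> 1"
    show "\<exists>y. ((\<lambda>u. b / 2 * u^2 - (p u - p 0 - p1 0 * u)) has_real_derivative y) (at u) \<and> 0 \<le> y"
      using u h2[OF u] by (intro exI[of _ "b * u - (p1 u - p1 0)"]) (auto intro!: derivative_eq_intros d1)
  qed simp
  then show "p 1 \<le> p 0 + p1 0 + b / 2" by simp
qed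

lemma lsc_seq:
  fixes g :: "'a::metric_space \<Rightarrow> ereal"
  assumes "lsc_fun g" "X \<longlonglongrightarrow> a" "y < g a"
  shows "eventually (\<lambda>j. y < g (X j)) sequentially"
proof -
  have "y < Liminf (at a) g" using assms(1,3) unfolding lsc_fun_def by (meson order_less_le_trans)
  then have "eventually (\<lambda>z. y < g z) (at a)" by (rule less_LiminfD)
  then obtain r where r: "r > 0" "\<And>z. z \<noteq> a \<Longrightarrow> dist z a < r \<Longrightarrow> y < g z"
    unfolding eventually_at by auto
  have r2: "\<And>z. dist z a < r \<Longrightarrow> y < g z" using r assms(3) by metis
  have "eventually (\<lambda>j. dist (X j) a < r) sequentially"
    using assms(2) r(1) by (rule tendstoD)
  then show ?thesis by eventually_elim (rule r2)
qed

lemma lsc_bounded_below: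
  fixes g :: "'a::metric_space \<Rightarrow> ereal"
  assumes "lsc_fun g" "\<And>z. g z \<noteq> -\<infinity>" "compact S"
  shows "\<exists>M. \<forall>z\<in>S. ereal M \<le> g z"
proof (rule ccontr)
  assume "\<not> ?thesis"
  then have "\<forall>n::nat. \<exists>z\<in>S. g z < ereal (- real n)" by (meson not_le)
  then obtain X where X: "\<And>n. X n \<in> S" "\<And>n. g (X n) < ereal (- real n)" by metis
  obtain l r where l: "l \<in> S" "strict_mono r" "(X \<circ> r) \<longlonglongrightarrow> l"
    using compact_imp_seq_compact[OF assms(3)] X(1) unfolding seq_compact_def by metis
  have "\<exists>c. ereal c < g l"
  proof (cases "g l")
    case (real r) then show ?thesis by (intro exI[of _ "r - 1"]) simp
  next
    case PInf then show ?thesis by (intro exI[of _ 0]) simp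
  next
    case MInf then show ?thesis using assms(2)[of l] by simp
  qed
  then obtain c where c: "ereal c < g l" by blast
  have e1: "eventually (\<lambda>j. ereal c < g ((X \<circ> r) j)) sequentially"
    by (rule lsc_seq[OF assms(1) l(3) c])
  have e2: "eventually (\<lambda>j. real j > - c) sequentially"
    by (rule eventually_sequentiallyI[of "nat \<lceil>- c\<rceil> + 1"]) linarith
  from e1 e2 have "eventually (\<lambda>j. False) sequentially"
  proof eventually_elim
    case (elim j)
    have "real j \<le> real (r j)" using seq_suble[OF l(2)] by simp
    then have "ereal (- real (r j)) < ereal c" using elim(2) by simp
    then have "g (X (r j)) < ereal c" using X(2)[of "r j"] by (rule less_trans[rotated])
    then show False using elim(1) by simp
  qed
  then show False by simp
qed

lemma ereal_convex_real:
  fixes g :: "'a::real_vector \<Rightarrow> ereal"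
  assumes "ereal_convex_fun g" "g a = ereal ga" "g b = ereal gb" "0 \<le> s" "s \<le> 1"
  shows "g ((1 - s) *\<^sub>R a + s *\<^sub>R b) \<le> ereal ((1 - s) * ga + s * gb)"
proof -
  consider "s = 0" | "s = 1" | "0 < s \<and> s < 1" using assms(4,5) by linarith
  then show ?thesis
  proof cases
    case 3
    then have "g ((1 - s) *\<^sub>R a + s *\<^sub>R b) \<le> ereal (1 - s) * g a + ereal s * g b"
      using assms(1) unfolding ereal_convex_fun_def by blast
    then show ?thesis using assms(2,3) by simp
  qed (use assms in auto)
qed




locale nt =
  fixes m :: nat
    and f :: "nat \<Rightarrow> real^'n \<Rightarrow> real"
    and Df :: "nat \<Rightarrow> real^'n \<Rightarrow> real^'n"
    and H :: "nat \<Rightarrow> real^'n \<Rightarrow> real^'n^'n"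
    and g :: "nat \<Rightarrow> real^'n \<Rightarrow> ereal"
    and \<mu> \<sigma> \<gamma> :: real
    and x d :: "nat \<Rightarrow> real^'n"
    and \<theta> :: "nat \<Rightarrow> ereal"
    and t :: "nat \<Rightarrow> real"
  assumes m_pos: "0 < m"
    and grad: "\<And>i y. i \<in> {1..m} \<Longrightarrow> (f i has_derivative (\<lambda>h. Df i y \<bullet> h)) (at y)"
    and hess: "\<And>i y. i \<in> {1..m} \<Longrightarrow> (Df i has_derivative (\<lambda>h. H i y *v h)) (at y)"
    and hess_cont: "\<And>i. i \<in> {1..m} \<Longrightarrow> continuous_on UNIV (H i)"
    and g_proper: "\<And>i. i \<in> {1..m} \<Longrightarrow> proper_fun (g i)"
    and g_convex: "\<And>i. i \<in> {1..m} \<Longrightarrow> ereal_convex_fun (g i)"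
    and g_lsc: "\<And>i. i \<in> {1..m} \<Longrightarrow> lsc_fun (g i)"
    and mu_pos: "0 < \<mu>"
    and strong: "\<And>i y v. i \<in> {1..m} \<Longrightarrow> \<mu> * (v \<bullet> v) \<le> v \<bullet> (H i y *v v)"
    and sigma: "0 < \<sigma>" "\<sigma> < 1"
    and gamma: "0 < \<gamma>" "\<gamma> < 1"
    and x0_dom: "\<And>i. i \<in> {1..m} \<Longrightarrow> g i (x 0) \<noteq> \<infinity>"
    and d_min: "\<And>k e. newton_subobj m Df H g (x k) (d k) \<le> newton_subobj m Df H g (x k) e"
    and theta_def: "\<And>k. \<theta> k = newton_subobj m Df H g (x k) (d k)"
    and t_mem: "\<And>k. \<exists>j. t k = \<gamma> ^ j \<and>
        (\<forall>i\<in>{1..m}. (ereal (f i (x k + \<gamma> ^ j *\<^sub>R d k)) + g i (x k + \<gamma> ^ j *\<^sub>R d k))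
                      - (ereal (f i (x k)) + g i (x k)) \<le> ereal (\<gamma> ^ j * \<sigma>) * \<theta> k)"
    and t_max: "\<And>k j. (\<forall>i\<in>{1..m}. (ereal (f i (x k + \<gamma> ^ j *\<^sub>R d k)) + g i (x k + \<gamma> ^ j *\<^sub>R d k))
                      - (ereal (f i (x k)) + g i (x k)) \<le> ereal (\<gamma> ^ j * \<sigma>) * \<theta> k)
                 \<Longrightarrow> \<gamma> ^ j \<le> t k"
    and x_step: "\<And>k. x (Suc k) = x k + t k *\<^sub>R d k"
begin

lemma taylor_f_ders:
  assumes i: "i \<in> {1..m}"
  shows "((\<lambda>s. f i (y + s *\<^sub>R v)) has_real_derivative Df i (y + s *\<^sub>R v) \<bullet> v) (at s)"
    and "((\<lambda>s. Df i (y + s *\<^sub>R v) \<bullet> v) has_real_derivative v \<bullet> (H i (y + s *\<^sub>R v) *v v)) (at s)"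
proof -
  have d1: "((\<lambda>s. f i (y + s *\<^sub>R v)) has_real_derivative Df i (y + s *\<^sub>R v) \<bullet> v) (at s)" for s
  proof -
    have "((\<lambda>s. f i (y + s *\<^sub>R v)) has_derivative (\<lambda>h. Df i (y + s *\<^sub>R v) \<bullet> (h *\<^sub>R v))) (at s)"
      by (rule has_derivative_compose[of "\<lambda>s. y + s *\<^sub>R v" _ _ _ "f i", OF _ grad[OF i]])
         (auto intro!: derivative_eq_intros)
    then show ?thesis
      by (rule has_derivative_imp_has_field_derivative) (simp add: inner_scaleR_right)
  qed
  have d2: "((\<lambda>s. Df i (y + s *\<^sub>R v) \<bullet> v) has_real_derivative v \<bullet> (H i (y + s *\<^sub>R v) *v v)) (at s)" for s
  proof -
    have "((\<lambda>s. Df i (y + s *\<^sub>R v)) has_derivative (\<lambda>h. H i (y + s *\<^sub>R v) *v (h *\<^sub>R v))) (at s)"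
      by (rule has_derivative_compose[of "\<lambda>s. y + s *\<^sub>R v" _ _ _ "Df i", OF _ hess[OF i]])
         (auto intro!: derivative_eq_intros)
    then have "((\<lambda>s. Df i (y + s *\<^sub>R v) \<bullet> v) has_derivative (\<lambda>h. (H i (y + s *\<^sub>R v) *v (h *\<^sub>R v)) \<bullet> v)) (at s)"
      by (auto intro!: derivative_eq_intros)
    then show ?thesis
      by (rule has_derivative_imp_has_field_derivative)
         (simp add: matrix_vector_mult_scaleR inner_commute inner_scaleR_right)
  qed
  show "((\<lambda>s. f i (y + s *\<^sub>R v)) has_real_derivative Df i (y + s *\<^sub>R v) \<bullet> v) (at s)"
    by (rule d1)
  show "((\<lambda>s. Df i (y + s *\<^sub>R v) \<bullet> v) has_real_derivative v \<bullet> (H i (y + s *\<^sub>R v) *v v)) (at s)"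
    by (rule d2)
qed

lemma taylor_lo:
  assumes i: "i \<in> {1..m}"
    and lo: "\<And>s. s \<in> {0..1} \<Longrightarrow> a \<le> v \<bullet> (H i (y + s *\<^sub>R v) *v v)"
  shows "f i y + Df i y \<bullet> v + a / 2 \<le> f i (y + v)"
  using taylor_lo_1d[of "\<lambda>s. f i (y + s *\<^sub>R v)" "\<lambda>s. Df i (y + s *\<^sub>R v) \<bullet> v"
        "\<lambda>s. v \<bullet> (H i (y + s *\<^sub>R v) *v v)" a] taylor_f_ders[OF i] lo by simp

lemma taylor_hi:
  assumes i: "i \<in> {1..m}"
    and hi: "\<And>s. s \<in> {0..1} \<Longrightarrow> v \<bullet> (H i (y + s *\<^sub>R v) *v v) \<le> b"
  shows "f i (y + v) \<le> f i y + Df i y \<bullet> v + b / 2"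
  using taylor_hi_1d[of "\<lambda>s. f i (y + s *\<^sub>R v)" "\<lambda>s. Df i (y + s *\<^sub>R v) \<bullet> v"
        "\<lambda>s. v \<bullet> (H i (y + s *\<^sub>R v) *v v)" b] taylor_f_ders[OF i] hi by simp

lemma strong_first_order:
  assumes i: "i \<in> {1..m}"
  shows "f i y + Df i y \<bullet> (z - y) + \<mu> / 2 * ((z - y) \<bullet> (z - y)) \<le> f i z"
  using taylor_lo[OF i, of "\<mu> * ((z - y) \<bullet> (z - y))" "z - y" y] strong[OF i]
  by (simp add: mult.commute)

definition tm :: "nat \<Rightarrow> real^'n \<Rightarrow> real^'n \<Rightarrow> ereal" where
  "tm i z e = ereal (Df i z \<bullet> e) + g i (z + e) - g i z + ereal (e \<bullet> (H i z *v e) / 2)"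

lemma subobj_eq: "newton_subobj m Df H g z e = Max ((\<lambda>i. tm i z e) ` {1..m})"
  unfolding newton_subobj_def tm_def by simp

lemma tm_le_subobj: "i \<in> {1..m} \<Longrightarrow> tm i z e \<le> newton_subobj m Df H g z e"
  unfolding subobj_eq by (rule Max_ge) auto

lemma subobj_le: "(\<And>i. i \<in> {1..m} \<Longrightarrow> tm i z e \<le> c) \<Longrightarrow> newton_subobj m Df H g z e \<le> c"
  unfolding subobj_eq using m_pos by (subst Max_le_iff) auto

lemma g_nminf: "i \<in> {1..m} \<Longrightarrow> g i z \<noteq> -\<infinity>"
  using g_proper unfolding proper_fun_def by blast

lemma tm_zero: "g i z \<noteq> \<infinity> \<Longrightarrow> g i z \<noteq> -\<infinity> \<Longrightarrow> tm i z 0 = 0"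
  unfolding tm_def by (cases "g i z") auto

lemma theta_le0:
  assumes "\<And>i. i \<in> {1..m} \<Longrightarrow> g i (x k) \<noteq> \<infinity>"
  shows "\<theta> k \<le> 0"
proof -
  have "\<theta> k \<le> newton_subobj m Df H g (x k) 0" using theta_def d_min by simp
  also have "\<dots> \<le> 0" by (rule subobj_le) (use assms g_nminf tm_zero in simp)
  finally show ?thesis .
qed

lemma dom_step:
  assumes dk: "\<And>i. i \<in> {1..m} \<Longrightarrow> g i (x k) \<noteq> \<infinity>"
  shows "\<theta> k \<noteq> -\<infinity>" and "\<And>i. i \<in> {1..m} \<Longrightarrow> g i (x (Suc k)) \<noteq> \<infinity>"
proof -
  obtain j where j: "t k = \<gamma> ^ j" and
    c: "\<forall>i\<in>{1..m}. (ereal (f i (x k + \<gamma> ^ j *\<^sub>R d k)) + g i (x k + \<gamma> ^ j *\<^sub>R d k))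
                      - (ereal (f i (x k)) + g i (x k)) \<le> ereal (\<gamma> ^ j * \<sigma>) * \<theta> k"
    using t_mem by blast
  have xs: "x (Suc k) = x k + \<gamma> ^ j *\<^sub>R d k" using x_step j by simp
  have pos: "\<gamma> ^ j * \<sigma> > 0" using gamma sigma by simp
  have one: "1 \<in> {1..m}" using m_pos by simp
  show thf: "\<theta> k \<noteq> -\<infinity>"
  proof
    assume "\<theta> k = -\<infinity>"
    then have "(ereal (f 1 (x k + \<gamma> ^ j *\<^sub>R d k)) + g 1 (x k + \<gamma> ^ j *\<^sub>R d k))
                      - (ereal (f 1 (x k)) + g 1 (x k)) \<le> ereal (\<gamma> ^ j * \<sigma>) * -\<infinity>" using c one by simp
    then have "(ereal (f 1 (x k + \<gamma> ^ j *\<^sub>R d k)) + g 1 (x k + \<gamma> ^ j *\<^sub>R d k))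
                      - (ereal (f 1 (x k)) + g 1 (x k)) \<le> -\<infinity>" using pos gamma sigma by simp
    moreover have "g 1 (x k + \<gamma> ^ j *\<^sub>R d k) \<noteq> -\<infinity>" "g 1 (x k) \<noteq> -\<infinity>" "g 1 (x k) \<noteq> \<infinity>"
      using g_nminf[OF one] dk[OF one] by auto
    ultimately show False
      by (cases "g 1 (x k + \<gamma> ^ j *\<^sub>R d k)"; cases "g 1 (x k)") auto
  qed
  have thn: "\<theta> k \<noteq> \<infinity>" using theta_le0[OF dk] by auto
  fix i assume i: "i \<in> {1..m}"
  have "(ereal (f i (x k + \<gamma> ^ j *\<^sub>R d k)) + g i (x k + \<gamma> ^ j *\<^sub>R d k))
                      - (ereal (f i (x k)) + g i (x k)) \<le> ereal (\<gamma> ^ j * \<sigma>) * \<theta> k" using c i by blast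
  moreover have "g i (x k) \<noteq> -\<infinity>" "g i (x k) \<noteq> \<infinity>"
    using g_nminf[OF i] dk[OF i] by auto
  ultimately show "g i (x (Suc k)) \<noteq> \<infinity>" unfolding xs using thf thn
    by (cases "g i (x k + \<gamma> ^ j *\<^sub>R d k)"; cases "g i (x k)"; cases "\<theta> k") auto
qed

lemma dom: "i \<in> {1..m} \<Longrightarrow> g i (x k) \<noteq> \<infinity>"
proof (induction k arbitrary: i)
  case 0 then show ?case using x0_dom by simp
next
  case (Suc k) then show ?case using dom_step(2) by blast
qed

lemma theta_fin: "\<theta> k = ereal (real_of_ereal (\<theta> k))"
  using dom_step(1)[OF dom, of k] theta_le0[OF dom, of k] by (cases "\<theta> k") auto

lemma g_fin: "i \<in> {1..m} \<Longrightarrow> g i (x k) = ereal (real_of_ereal (g i (x k)))"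
  using dom g_nminf by (cases "g i (x k)") auto

definition "th k = real_of_ereal (\<theta> k)"
definition "G i k = real_of_ereal (g i (x k))"
definition "Phi i k = f i (x k) + G i k"

lemma th_le0: "th k \<le> 0"
proof -
  have "\<theta> k \<le> 0" by (rule theta_le0) (rule dom)
  then show ?thesis unfolding th_def by (cases "\<theta> k") auto
qed

lemma theta_eq: "\<theta> k = ereal (th k)" using theta_fin unfolding th_def by simp

lemma g_eq: "i \<in> {1..m} \<Longrightarrow> g i (x k) = ereal (G i k)" using g_fin unfolding G_def by simp

lemma tm_real_le:
  assumes i: "i \<in> {1..m}" and gz: "g i z = ereal gz" and ge: "g i (z + e) \<le> ereal B"
  shows "tm i z e \<le> ereal (Df i z \<bullet> e + B - gz + e \<bullet> (H i z *v e) / 2)"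
  using ge g_nminf[OF i, of "z + e"] unfolding tm_def gz by (cases "g i (z + e)") auto

lemma t_props: "\<exists>j. t k = \<gamma> ^ j" "0 < t k" "t k \<le> 1"
proof -
  obtain j where j: "t k = \<gamma> ^ j" using t_mem by blast
  then show "\<exists>j. t k = \<gamma> ^ j" by blast
  show "0 < t k" using j gamma by simp
  show "t k \<le> 1" using j gamma by (simp add: power_le_one)
qed

lemma descent: assumes i: "i \<in> {1..m}" shows "Phi i (Suc k) \<le> Phi i k + t k * \<sigma> * th k"
proof -
  obtain j where j: "t k = \<gamma> ^ j" and
    c: "\<forall>i\<in>{1..m}. (ereal (f i (x k + \<gamma> ^ j *\<^sub>R d k)) + g i (x k + \<gamma> ^ j *\<^sub>R d k))
                      - (ereal (f i (x k)) + g i (x k)) \<le> ereal (\<gamma> ^ j * \<sigma>) * \<theta> k"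
    using t_mem by blast
  have xs: "x (Suc k) = x k + \<gamma> ^ j *\<^sub>R d k" using x_step j by simp
  from c i have h0: "(ereal (f i (x k + \<gamma> ^ j *\<^sub>R d k)) + g i (x k + \<gamma> ^ j *\<^sub>R d k))
                      - (ereal (f i (x k)) + g i (x k)) \<le> ereal (\<gamma> ^ j * \<sigma>) * \<theta> k" by blast
  have "(ereal (f i (x (Suc k))) + g i (x (Suc k))) - (ereal (f i (x k)) + g i (x k))
     \<le> ereal (t k * \<sigma>) * \<theta> k"
    unfolding xs j by (rule h0)
  then have "(ereal (f i (x (Suc k))) + ereal (G i (Suc k))) - (ereal (f i (x k)) + ereal (G i k))
     \<le> ereal (t k * \<sigma>) * ereal (th k)"
    by (simp only: g_eq[OF i, of k] g_eq[OF i, of "Suc k"] theta_eq[of k])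
  then have "f i (x (Suc k)) + G i (Suc k) - (f i (x k) + G i k) \<le> t k * \<sigma> * th k"
    by (simp only: plus_ereal.simps(1) ereal_minus(1) times_ereal.simps(1) ereal_less_eq(3))
  then show ?thesis unfolding Phi_def by linarith
qed

lemma gd_fin: assumes i: "i \<in> {1..m}" shows "g i (x k + d k) \<noteq> \<infinity>"
proof
  assume inf: "g i (x k + d k) = \<infinity>"
  have "tm i (x k) (d k) \<le> \<theta> k" unfolding theta_def by (rule tm_le_subobj[OF i])
  moreover have "tm i (x k) (d k) = \<infinity>" unfolding tm_def inf g_eq[OF i, of k] by simp
  ultimately show False using theta_eq[of k] by simp
qed

definition "Ga i k = real_of_ereal (g i (x k + d k))"

lemma ga_eq: "i \<in> {1..m} \<Longrightarrow> g i (x k + d k) = ereal (Ga i k)"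
  unfolding Ga_def using gd_fin g_nminf by (cases "g i (x k + d k)") auto

lemma tm_real: assumes i: "i \<in> {1..m}"
  shows "Df i (x k) \<bullet> d k + Ga i k - G i k + d k \<bullet> (H i (x k) *v d k) / 2 \<le> th k"
proof -
  have "tm i (x k) (d k) \<le> \<theta> k" unfolding theta_def by (rule tm_le_subobj[OF i])
  then show ?thesis unfolding tm_def ga_eq[OF i, of k] g_eq[OF i, of k] theta_eq[of k] by simp
qed

lemma th_bound: "th k \<le> - \<mu> / 4 * (d k \<bullet> d k)"
proof -
  let ?e = "(1/2::real) *\<^sub>R d k"
  have "\<theta> k \<le> newton_subobj m Df H g (x k) ?e" using theta_def d_min by simp
  also have "\<dots> \<le> ereal (th k / 2 - \<mu> / 8 * (d k \<bullet> d k))"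
  proof (rule subobj_le)
    fix i assume i: "i \<in> {1..m}"
    have pt: "x k + ?e = (1 - 1/2) *\<^sub>R x k + (1/2) *\<^sub>R (x k + d k)"
      by (simp add: scaleR_add_right)
    have "g i (x k + ?e) \<le> ereal ((1 - 1/2) * G i k + (1/2) * Ga i k)"
      unfolding pt by (rule ereal_convex_real[OF g_convex[OF i] g_eq[OF i, of k] ga_eq[OF i, of k]]) auto
    then have "tm i (x k) ?e \<le> ereal (Df i (x k) \<bullet> ?e + ((1 - 1/2) * G i k + (1/2) * Ga i k) - G i k
        + ?e \<bullet> (H i (x k) *v ?e) / 2)"
      by (rule tm_real_le[OF i g_eq[OF i, of k]])
    also have "\<dots> \<le> ereal (th k / 2 - \<mu> / 8 * (d k \<bullet> d k))"
    proof -
      have q: "?e \<bullet> (H i (x k) *v ?e) = d k \<bullet> (H i (x k) *v d k) / 4"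
        by (simp add: matrix_vector_mult_scaleR inner_scaleR_left inner_scaleR_right)
      have "\<mu> * (d k \<bullet> d k) \<le> d k \<bullet> (H i (x k) *v d k)" by (rule strong[OF i])
      have de: "Df i (x k) \<bullet> ?e = Df i (x k) \<bullet> d k / 2" by (simp add: inner_scaleR_right)
      have "Df i (x k) \<bullet> ?e + ((1 - 1/2) * G i k + (1/2) * Ga i k) - G i k
        + ?e \<bullet> (H i (x k) *v ?e) / 2 \<le> th k / 2 - \<mu> / 8 * (d k \<bullet> d k)"
        unfolding q de using tm_real[OF i, of k] \<open>\<mu> * (d k \<bullet> d k) \<le> d k \<bullet> (H i (x k) *v d k)\<close>
          mult.assoc[of "\<mu> / 8" "d k \<bullet> d k"] times_divide_eq_left[of \<mu> 8 "d k \<bullet> d k"]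
        by (simp add: mult.commute[of _ \<mu>] del: times_divide_eq_left)
      then show ?thesis by (simp only: ereal_less_eq)
    qed
    finally show "tm i (x k) ?e \<le> ereal (th k / 2 - \<mu> / 8 * (d k \<bullet> d k))" .
  qed
  finally show ?thesis unfolding theta_eq[of k] by simp
qed


lemma Phi_step: "i \<in> {1..m} \<Longrightarrow> Phi i (Suc k) \<le> Phi i k"
proof -
  assume i: "i \<in> {1..m}"
  have "t k * \<sigma> * th k \<le> 0"
    using t_props(2)[of k] sigma th_le0[of k] by (simp add: mult_nonneg_nonpos)
  then show ?thesis using descent[OF i, of k] by linarith
qed

lemma Phi_le: "i \<in> {1..m} \<Longrightarrow> k \<le> l \<Longrightarrow> Phi i l \<le> Phi i k"
proof (induction l)
  case 0 then show ?case by simp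
next
  case (Suc l) then show ?case using Phi_step[of i l] by (cases "k = Suc l") auto
qed

lemma f_cont: "i \<in> {1..m} \<Longrightarrow> continuous_on S (f i)"
  using grad by (meson has_derivative_continuous continuous_at_imp_continuous_on)

lemma F_lower:
  assumes i: "i \<in> {1..m}" and S: "compact S"
  shows "\<exists>M. \<forall>z\<in>S. ereal M \<le> ereal (f i z) + g i z"
proof -
  obtain Mg where Mg: "\<And>z. z \<in> S \<Longrightarrow> ereal Mg \<le> g i z"
    using lsc_bounded_below[OF g_lsc[OF i] g_nminf[OF i] S] by blast
  have "compact (f i ` S)" by (rule compact_continuous_image[OF f_cont[OF i] S])
  then obtain B where B: "\<And>z. z \<in> S \<Longrightarrow> norm (f i z) \<le> B"
    using compact_imp_bounded bounded_iff by (metis image_eqI)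
  have "ereal (- B + Mg) \<le> ereal (f i z) + g i z" if z: "z \<in> S" for z
  proof -
    have "- B \<le> f i z" using B[OF z] by simp
    then have "ereal (- B) + ereal Mg \<le> ereal (f i z) + g i z"
      using Mg[OF z] by (intro add_mono) auto
    then show ?thesis by simp
  qed
  then show ?thesis by blast
qed

lemma f_strong_seg:
  assumes i: "i \<in> {1..m}" and l: "0 \<le> l" "l \<le> 1"
  shows "f i ((1 - l) *\<^sub>R a + l *\<^sub>R b) \<le> (1 - l) * f i a + l * f i b - \<mu> / 2 * (l * (1 - l)) * ((b - a) \<bullet> (b - a))"
proof -
  define z where "z = (1 - l) *\<^sub>R a + l *\<^sub>R b"
  define w where "w = b - a"
  define D where "D = Df i z \<bullet> w"
  define W where "W = w \<bullet> w"
  have az: "a - z = (- l) *\<^sub>R w" unfolding z_def w_def by (simp add: algebra_simps)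
  have bz: "b - z = (1 - l) *\<^sub>R w" unfolding z_def w_def by (simp add: algebra_simps)
  have A: "f i z - l * D + \<mu> / 2 * (l * l * W) \<le> f i a"
    using strong_first_order[OF i, of z a] unfolding az D_def W_def
    by (simp add: inner_scaleR_right inner_scaleR_left)
  have B: "f i z + (1 - l) * D + \<mu> / 2 * ((1 - l) * (1 - l) * W) \<le> f i b"
    using strong_first_order[OF i, of z b] unfolding bz D_def W_def
    by (simp add: inner_scaleR_right inner_scaleR_left)
  have A': "(1 - l) * (f i z - l * D + \<mu> / 2 * (l * l * W)) \<le> (1 - l) * f i a"
    using A l by (intro mult_left_mono) auto
  have B': "l * (f i z + (1 - l) * D + \<mu> / 2 * ((1 - l) * (1 - l) * W)) \<le> l * f i b"
    using B l by (intro mult_left_mono) auto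
  have eq: "(1 - l) * (f i z - l * D + \<mu> / 2 * (l * l * W)) + l * (f i z + (1 - l) * D + \<mu> / 2 * ((1 - l) * (1 - l) * W))
     = f i z + \<mu> / 2 * (l * (1 - l)) * W"
    by (simp add: algebra_simps add_divide_distrib[symmetric] diff_divide_distrib[symmetric])
  show ?thesis using A' B' eq unfolding z_def[symmetric] w_def[symmetric] W_def[symmetric] by linarith
qed

lemma x_near: "\<exists>R0. \<forall>k. norm (x k - x 0) \<le> R0"
proof -
  have one: "1 \<in> {1..m}" using m_pos by simp
  obtain M1 where M1: "\<And>z. z \<in> cball (x 0) 1 \<Longrightarrow> ereal M1 \<le> ereal (f 1 z) + g 1 z"
    using F_lower[OF one compact_cball] by blast
  have "norm (x k - x 0) \<le> 1 + 2 * (Phi 1 0 - M1) / \<mu>" for k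
  proof (rule ccontr)
    assume "\<not> ?thesis"
    then have big: "norm (x k - x 0) > 1 + 2 * (Phi 1 0 - M1) / \<mu>" by simp
    define r where "r = norm (x k - x 0)"
    have "Phi 1 0 - M1 \<ge> 0"
    proof -
      have "ereal M1 \<le> ereal (f 1 (x 0)) + g 1 (x 0)" by (rule M1) simp
      then show ?thesis unfolding g_eq[OF one, of 0] Phi_def by simp
    qed
    then have "2 * (Phi 1 0 - M1) / \<mu> \<ge> 0" using mu_pos by simp
    then have r1: "r > 1" using big unfolding r_def by linarith
    define l where "l = 1 / r"
    have l: "0 \<le> l" "l \<le> 1" "l * r = 1" using r1 unfolding l_def by auto
    define u where "u = (1 - l) *\<^sub>R x 0 + l *\<^sub>R x k"
    have "u - x 0 = l *\<^sub>R (x k - x 0)" unfolding u_def by (simp add: algebra_simps)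
    then have "norm (u - x 0) = 1" using l unfolding r_def by simp
    then have uin: "u \<in> cball (x 0) 1" by (simp add: dist_norm norm_minus_commute)
    have gu: "g 1 u \<le> ereal ((1 - l) * G 1 0 + l * G 1 k)"
      unfolding u_def by (rule ereal_convex_real[OF g_convex[OF one] g_eq[OF one, of 0] g_eq[OF one, of k] l(1,2)])
    have fu: "f 1 u \<le> (1 - l) * f 1 (x 0) + l * f 1 (x k) - \<mu> / 2 * (l * (1 - l)) * ((x k - x 0) \<bullet> (x k - x 0))"
      unfolding u_def by (rule f_strong_seg[OF one l(1,2)])
    have "ereal M1 \<le> ereal (f 1 u) + g 1 u" by (rule M1[OF uin])
    also have "\<dots> \<le> ereal (f 1 u) + ereal ((1 - l) * G 1 0 + l * G 1 k)" by (rule add_left_mono[OF gu])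
    finally have c0: "M1 \<le> f 1 u + ((1 - l) * G 1 0 + l * G 1 k)" by simp
    have c1: "f 1 u + ((1 - l) * G 1 0 + l * G 1 k) \<le> (1 - l) * Phi 1 0 + l * Phi 1 k - \<mu> / 2 * (l * (1 - l)) * (r * r)"
      using fu unfolding Phi_def r_def by (simp add: algebra_simps dot_square_norm power2_eq_square)
    have c2: "\<mu> / 2 * (l * (1 - l)) * (r * r) = \<mu> / 2 * (r - 1)" using l by (simp add: algebra_simps)
    have c3: "(1 - l) * Phi 1 0 + l * Phi 1 k \<le> Phi 1 0"
    proof -
      have "l * Phi 1 k \<le> l * Phi 1 0" using Phi_le[OF one, of 0 k] l by (intro mult_left_mono) auto
      then show ?thesis by (simp add: algebra_simps)
    qed
    have "M1 \<le> Phi 1 0 - \<mu> / 2 * (r - 1)" using c0 c1 c2 c3 by linarith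
    then have "\<mu> * (r - 1) \<le> 2 * (Phi 1 0 - M1)" by simp
    then have "r - 1 \<le> 2 * (Phi 1 0 - M1) / \<mu>" using mu_pos by (simp add: field_simps)
    then show False using big unfolding r_def by linarith
  qed
  then show ?thesis by blast
qed

lemma matrix_quad_bound:
  fixes A :: "real^'n^'n"
  shows "v \<bullet> (A *v v) \<le> (real CARD('n) * real CARD('n) * norm A) * (v \<bullet> v)"
proof -
  have c: "\<And>i j. \<bar>A $ i $ j\<bar> \<le> norm A"
    using order_trans[OF component_le_norm_cart Finite_Cartesian_Product.norm_nth_le] by blast
  have o: "onorm ((*v) A) \<le> real CARD('n) * real CARD('n) * norm A"
    by (rule onorm_le_matrix_component) (rule c)
  have "v \<bullet> (A *v v) \<le> norm v * norm (A *v v)" by (rule norm_cauchy_schwarz)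
  also have "\<dots> \<le> norm v * (onorm ((*v) A) * norm v)"
    by (intro mult_left_mono onorm) auto
  also have "\<dots> \<le> norm v * ((real CARD('n) * real CARD('n) * norm A) * norm v)"
    by (intro mult_left_mono mult_right_mono o) auto
  also have "\<dots> = (real CARD('n) * real CARD('n) * norm A) * (v \<bullet> v)"
    by (simp add: dot_square_norm power2_eq_square)
  finally show ?thesis .
qed

lemma consts_exist: "\<exists>R \<Lambda>. 0 \<le> R \<and> 0 < \<Lambda> \<and> (\<forall>k. norm (x k) \<le> R) \<and>
   (\<forall>i\<in>{1..m}. \<forall>z\<in>cball 0 (R + 1). \<forall>v. v \<bullet> (H i z *v v) \<le> \<Lambda> * (v \<bullet> v))"
proof -
  obtain R0 where R0: "\<And>k. norm (x k - x 0) \<le> R0" using x_near by blast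
  define R where "R = norm (x 0) + R0"
  have R: "norm (x k) \<le> R" for k
    using R0[of k] norm_triangle_ineq[of "x k - x 0" "x 0"] unfolding R_def by simp
  have R_nn: "0 \<le> R" using R[of 0] norm_ge_zero order_trans by blast
  have "\<forall>i\<in>{1..m}. \<exists>B. \<forall>z\<in>cball 0 (R + 1). norm (H i z) \<le> B"
  proof
    fix i assume i: "i \<in> {1..m}"
    have "compact (H i ` cball 0 (R + 1))"
      by (rule compact_continuous_image[OF continuous_on_subset[OF hess_cont[OF i]]]) auto
    then show "\<exists>B. \<forall>z\<in>cball 0 (R + 1). norm (H i z) \<le> B"
      using compact_imp_bounded bounded_iff by (metis image_eqI)
  qed
  then obtain Bf where Bf: "\<And>i z. i \<in> {1..m} \<Longrightarrow> z \<in> cball 0 (R + 1) \<Longrightarrow> norm (H i z) \<le> Bf i"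
    by metis
  define B where "B = (\<Sum>i\<in>{1..m}. \<bar>Bf i\<bar>)"
  have BB: "\<And>i. i \<in> {1..m} \<Longrightarrow> \<bar>Bf i\<bar> \<le> B"
    unfolding B_def by (rule member_le_sum) auto
  define \<Lambda> where "\<Lambda> = real CARD('n) * real CARD('n) * B + 1"
  have B0: "0 \<le> B" unfolding B_def by (simp add: sum_nonneg)
  have L0: "0 < \<Lambda>" unfolding \<Lambda>_def using B0 by (simp add: add_nonneg_pos)
  have "v \<bullet> (H i z *v v) \<le> \<Lambda> * (v \<bullet> v)" if i: "i \<in> {1..m}" and z: "z \<in> cball 0 (R + 1)" for i z v
  proof -
    have nb: "norm (H i z) \<le> B" using Bf[OF i z] BB[OF i] by linarith
    have "v \<bullet> (H i z *v v) \<le> (real CARD('n) * real CARD('n) * norm (H i z)) * (v \<bullet> v)"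
      by (rule matrix_quad_bound)
    also have "\<dots> \<le> \<Lambda> * (v \<bullet> v)"
    proof (rule mult_right_mono)
      have "real CARD('n) * real CARD('n) * norm (H i z) \<le> real CARD('n) * real CARD('n) * B"
        using nb by (intro mult_left_mono) auto
      then show "real CARD('n) * real CARD('n) * norm (H i z) \<le> \<Lambda>" unfolding \<Lambda>_def by linarith
    qed simp
    finally show ?thesis .
  qed
  then show ?thesis using R R_nn L0 by blast
qed

lemma lim_exist: assumes i: "i \<in> {1..m}" shows "\<exists>L. (\<lambda>k. Phi i k) \<longlonglongrightarrow> L \<and> (\<forall>k. L \<le> Phi i k)"
proof -
  obtain R where R: "\<And>k. norm (x k) \<le> R" using consts_exist by blast
  obtain M where M: "\<And>z. z \<in> cball 0 R \<Longrightarrow> ereal M \<le> ereal (f i z) + g i z"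
    using F_lower[OF i compact_cball] by blast
  have low: "M \<le> Phi i k" for k
  proof -
    have "ereal M \<le> ereal (f i (x k)) + g i (x k)" by (rule M) (use R in simp)
    then show ?thesis unfolding g_eq[OF i, of k] Phi_def by simp
  qed
  have "decseq (\<lambda>k. Phi i k)" using Phi_le[OF i] by (simp add: decseq_def)
  then obtain L where "(\<lambda>k. Phi i k) \<longlonglongrightarrow> L" "\<forall>k. L \<le> Phi i k"
    using decseq_convergent low by blast
  then show ?thesis by blast
qed

end

locale nt2 = nt m f Df H g \<mu> \<sigma> \<gamma> x d \<theta> t
  for m :: nat
    and f :: "nat \<Rightarrow> real^'n \<Rightarrow> real"
    and Df :: "nat \<Rightarrow> real^'n \<Rightarrow> real^'n"
    and H :: "nat \<Rightarrow> real^'n \<Rightarrow> real^'n^'n"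
    and g :: "nat \<Rightarrow> real^'n \<Rightarrow> ereal"
    and \<mu> \<sigma> \<gamma> :: real
    and x d :: "nat \<Rightarrow> real^'n"
    and \<theta> :: "nat \<Rightarrow> ereal"
    and t :: "nat \<Rightarrow> real" +
  fixes R \<Lambda> :: real and L :: "nat \<Rightarrow> real"
  assumes R_nn: "0 \<le> R" and Lam_pos: "0 < \<Lambda>" and xR: "\<And>k. norm (x k) \<le> R"
    and Hb: "\<And>i z v. i \<in> {1..m} \<Longrightarrow> z \<in> cball 0 (R + 1) \<Longrightarrow> v \<bullet> (H i z *v v) \<le> \<Lambda> * (v \<bullet> v)"
    and Llim: "\<And>i. i \<in> {1..m} \<Longrightarrow> (\<lambda>k. Phi i k) \<longlonglongrightarrow> L i"
    and Lle: "\<And>i k. i \<in> {1..m} \<Longrightarrow> L i \<le> Phi i k"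
begin

lemma one_in: "1 \<in> {1..m}" using m_pos by simp

definition "a k = t k * (- th k)"

lemma a_nn: "0 \<le> a k" unfolding a_def using t_props(2)[of k] th_le0[of k] by (simp add: mult_nonneg_nonpos)

lemma a_sum: "(\<Sum>k<K. a k) \<le> (Phi 1 0 - L 1) / \<sigma>"
proof -
  have "\<sigma> * (\<Sum>k<K. a k) \<le> Phi 1 0 - Phi 1 K"
  proof (induction K)
    case 0 then show ?case by simp
  next
    case (Suc K)
    have "Phi 1 (Suc K) \<le> Phi 1 K + t K * \<sigma> * th K" by (rule descent[OF one_in])
    then have "\<sigma> * a K \<le> Phi 1 K - Phi 1 (Suc K)" unfolding a_def by (simp add: algebra_simps)
    then show ?case using Suc by (simp add: algebra_simps)
  qed
  also have "\<dots> \<le> Phi 1 0 - L 1" using Lle[OF one_in, of K] by simp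
  finally show ?thesis using sigma by (simp add: field_simps mult.commute)
qed

lemma a_tendsto: "a \<longlonglongrightarrow> 0"
proof -
  have "summable a" by (rule summableI_nonneg_bounded[OF a_nn a_sum])
  then show ?thesis by (rule summable_LIMSEQ_zero)
qed

end

context nt2 begin

lemma armijo_ok:
  assumes s: "0 < s" "s \<le> 1" "s * \<Lambda> \<le> \<mu>" "s * norm (d k) \<le> 1"
  shows "\<forall>i\<in>{1..m}. (ereal (f i (x k + s *\<^sub>R d k)) + g i (x k + s *\<^sub>R d k))
            - (ereal (f i (x k)) + g i (x k)) \<le> ereal (s * \<sigma>) * \<theta> k"
proof
  fix i assume i: "i \<in> {1..m}"
  have pt: "x k + s *\<^sub>R d k = (1 - s) *\<^sub>R x k + s *\<^sub>R (x k + d k)"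
    by (simp add: algebra_simps)
  have gle: "g i (x k + s *\<^sub>R d k) \<le> ereal ((1 - s) * G i k + s * Ga i k)"
    unfolding pt by (rule ereal_convex_real[OF g_convex[OF i] g_eq[OF i, of k] ga_eq[OF i, of k]]) (use s in auto)
  obtain c where gc: "g i (x k + s *\<^sub>R d k) = ereal c" and cle: "c \<le> (1 - s) * G i k + s * Ga i k"
    using gle g_nminf[OF i, of "x k + s *\<^sub>R d k"] by (cases "g i (x k + s *\<^sub>R d k)") auto
  define v where "v = s *\<^sub>R d k"
  have hb: "v \<bullet> (H i (x k + \<tau> *\<^sub>R v) *v v) \<le> \<Lambda> * (v \<bullet> v)" if tau: "\<tau> \<in> {0..1}" for \<tau>
  proof (rule Hb[OF i])
    have "norm (x k + \<tau> *\<^sub>R v) \<le> norm (x k) + norm (\<tau> *\<^sub>R v)" by (rule norm_triangle_ineq)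
    also have "norm (\<tau> *\<^sub>R v) = \<tau> * (s * norm (d k))" unfolding v_def using tau s by simp
    also have "\<tau> * (s * norm (d k)) \<le> 1" using tau s(1,4) mult_le_one[of \<tau> "s * norm (d k)"] by simp
    finally show "x k + \<tau> *\<^sub>R v \<in> cball 0 (R + 1)" using xR[of k] by simp
  qed
  have fle: "f i (x k + v) \<le> f i (x k) + Df i (x k) \<bullet> v + \<Lambda> * (v \<bullet> v) / 2"
    by (rule taylor_hi[OF i]) (rule hb)
  define D where "D = Df i (x k) \<bullet> d k"
  define n2 where "n2 = d k \<bullet> d k"
  define Q where "Q = d k \<bullet> (H i (x k) *v d k)"
  have vv: "v \<bullet> v = s * s * n2" unfolding v_def n2_def by (simp add: inner_scaleR_left inner_scaleR_right)
  have Dv: "Df i (x k) \<bullet> v = s * D" unfolding v_def D_def by (simp add: inner_scaleR_right)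
  have a1: "D + Ga i k - G i k + Q / 2 \<le> th k" using tm_real[OF i, of k] unfolding D_def Q_def .
  have a2: "\<mu> * n2 \<le> Q" unfolding n2_def Q_def by (rule strong[OF i])
  have m1: "s * (D + Ga i k - G i k) \<le> s * (th k - \<mu> * n2 / 2)"
    using a1 a2 s(1) by (intro mult_left_mono) auto
  have n2nn: "0 \<le> n2" unfolding n2_def by simp
  have m2: "(s * \<Lambda>) * (s * n2) \<le> \<mu> * (s * n2)"
    using s n2nn by (intro mult_right_mono) auto
  have m3: "s * th k \<le> s * \<sigma> * th k"
  proof -
    have "s * th k * (1 - \<sigma>) \<le> 0" using th_le0[of k] s(1) sigma
      by (simp add: mult_nonpos_nonneg mult_nonneg_nonpos)
    then show ?thesis by (simp add: algebra_simps)
  qed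
  have "f i (x k + v) + c - (f i (x k) + G i k) \<le> s * \<sigma> * th k"
  proof -
    have e1: "s * (D + Ga i k - G i k) = s * D + s * Ga i k - s * G i k" by (simp add: algebra_simps)
    have e2: "s * (th k - \<mu> * n2 / 2) = s * th k - (\<mu> * (s * n2)) / 2" by (simp add: algebra_simps)
    have e3: "\<Lambda> * (s * s * n2) = (s * \<Lambda>) * (s * n2)" by (simp add: algebra_simps)
    have e4: "(1 - s) * G i k + s * Ga i k = G i k - s * G i k + s * Ga i k" by (simp add: algebra_simps)
    show ?thesis using fle cle m1 m2 m3 e1 e2 e3 e4 unfolding vv Dv by linarith
  qed
  then show "(ereal (f i (x k + s *\<^sub>R d k)) + g i (x k + s *\<^sub>R d k))
            - (ereal (f i (x k)) + g i (x k)) \<le> ereal (s * \<sigma>) * \<theta> k"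
    unfolding v_def[symmetric] gc[folded v_def] g_eq[OF i, of k] theta_eq[of k] by simp
qed

lemma t_lower:
  assumes dk: "d k \<noteq> 0"
  shows "\<gamma> * min 1 (min (\<mu> / \<Lambda>) (1 / norm (d k))) \<le> t k"
proof -
  define r where "r = min 1 (min (\<mu> / \<Lambda>) (1 / norm (d k)))"
  have r0: "0 < r" unfolding r_def using mu_pos Lam_pos dk by simp
  obtain n where n: "\<gamma> ^ n < r" using real_arch_pow_inv[OF r0 gamma(2)] by blast
  define j where "j = (LEAST n. \<gamma> ^ n \<le> r)"
  have jr: "\<gamma> ^ j \<le> r" unfolding j_def by (rule LeastI[of _ n]) (use n in simp)
  have low: "\<gamma> * r \<le> \<gamma> ^ j"
  proof (cases j)
    case 0
    have "r \<le> 1" unfolding r_def by simp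
    then show ?thesis using 0 gamma r0 mult_le_one[of \<gamma> r] by simp
  next
    case (Suc j')
    have "\<not> \<gamma> ^ j' \<le> r" using Suc unfolding j_def by (metis Suc_n_not_le_n Least_le j_def)
    then have "r \<le> \<gamma> ^ j'" by simp
    then show ?thesis using Suc gamma by simp
  qed
  have s0: "0 < \<gamma> ^ j" using gamma by simp
  have s1: "\<gamma> ^ j \<le> 1" using jr unfolding r_def by simp
  have s2: "\<gamma> ^ j * \<Lambda> \<le> \<mu>"
  proof -
    have "\<gamma> ^ j \<le> \<mu> / \<Lambda>" using jr unfolding r_def by simp
    then show ?thesis using Lam_pos by (simp add: field_simps)
  qed
  have s3: "\<gamma> ^ j * norm (d k) \<le> 1"
  proof -
    have "\<gamma> ^ j \<le> 1 / norm (d k)" using jr unfolding r_def by simp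
    then show ?thesis using dk by (simp add: field_simps)
  qed
  have "\<gamma> ^ j \<le> t k" by (rule t_max) (rule armijo_ok[OF s0 s1 s2 s3])
  then show ?thesis using low unfolding r_def by linarith
qed

lemma th_small: "- th k \<le> a k / (\<gamma> * min 1 (\<mu> / \<Lambda>)) + 4 * (a k)^2 / (\<gamma>^2 * \<mu>)"
proof -
  define \<rho> where "\<rho> = min 1 (\<mu> / \<Lambda>)"
  have rho0: "0 < \<rho>" unfolding \<rho>_def using mu_pos Lam_pos by simp
  have t1: "0 \<le> a k / (\<gamma> * \<rho>)" using a_nn[of k] rho0 gamma by simp
  have t2: "0 \<le> 4 * (a k)^2 / (\<gamma>^2 * \<mu>)" using mu_pos by simp
  define T where "T = - th k"
  have T0: "0 \<le> T" unfolding T_def using th_le0[of k] by simp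
  have aT: "a k = t k * T" unfolding a_def T_def by simp
  show ?thesis
  proof (cases "d k = 0")
    case True
    have "th k \<le> 0" by (rule th_le0)
    moreover have "\<theta> k \<ge> 0"
    proof -
      have "\<theta> k = newton_subobj m Df H g (x k) 0" using theta_def True by simp
      also have "\<dots> \<ge> tm 1 (x k) 0" by (rule tm_le_subobj[OF one_in])
      also have "tm 1 (x k) 0 = 0" by (rule tm_zero) (use g_eq[OF one_in, of k] in auto)
      finally show ?thesis by simp
    qed
    ultimately have "th k = 0" unfolding theta_eq[of k] by simp
    then show ?thesis using t1 t2 unfolding \<rho>_def by simp
  next
    case False
    define N where "N = norm (d k)"
    have N0: "0 < N" unfolding N_def using False by simp
    have tl: "\<gamma> * min 1 (min (\<mu> / \<Lambda>) (1 / N)) \<le> t k" unfolding N_def by (rule t_lower[OF False])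
    have nb: "\<mu> * (N * N) \<le> 4 * T"
      using th_bound[of k] unfolding T_def N_def by (simp add: dot_square_norm power2_eq_square)
    show ?thesis
    proof (cases "\<rho> \<le> 1 / N")
      case True
      then have "min 1 (min (\<mu> / \<Lambda>) (1 / N)) = \<rho>" unfolding \<rho>_def by linarith
      then have "\<gamma> * \<rho> \<le> t k" using tl by simp
      then have "\<gamma> * \<rho> * T \<le> a k" unfolding aT using T0 by (rule mult_right_mono)
      then have "T * (\<gamma> * \<rho>) \<le> a k" by (simp add: ac_simps)
      then have "T \<le> a k / (\<gamma> * \<rho>)" using rho0 gamma by (subst pos_le_divide_eq) auto
      then show ?thesis using t2 unfolding T_def \<rho>_def by linarith
    next
      case False
      then have "min 1 (min (\<mu> / \<Lambda>) (1 / N)) = 1 / N" unfolding \<rho>_def by linarith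
      then have "\<gamma> / N \<le> t k" using tl by simp
      then have "\<gamma> / N * T \<le> a k" unfolding aT using T0 by (rule mult_right_mono)
      then have g1: "\<gamma> * T \<le> a k * N" using N0 by (simp add: field_simps)
      have "(\<gamma> * T)^2 \<le> (a k * N)^2" using g1 gamma T0 by (intro power_mono) auto
      then have g2: "\<gamma>^2 * (T * T) \<le> (a k)^2 * (N * N)" by (simp add: power2_eq_square algebra_simps)
      have g3: "(a k)^2 * (\<mu> * (N * N)) \<le> (a k)^2 * (4 * T)" using nb by (intro mult_left_mono) auto
      have g4: "\<mu> * (\<gamma>^2 * (T * T)) \<le> \<mu> * ((a k)^2 * (N * N))" using g2 mu_pos by (intro mult_left_mono) auto
      have e1: "\<mu> * (\<gamma>^2 * (T * T)) = T * (T * (\<gamma>^2 * \<mu>))" by (simp add: ac_simps)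
      have e2: "(a k)^2 * (4 * T) = T * (4 * (a k)^2)" by (simp add: ac_simps)
      have g5: "T * (T * (\<gamma>^2 * \<mu>)) \<le> T * (4 * (a k)^2)" using g3 g4 e1 e2 mult.left_commute[of \<mu> "(a k)^2" "N * N"] by linarith
      have "T * (\<gamma>^2 * \<mu>) \<le> 4 * (a k)^2"
      proof (cases "T = 0")
        case True then show ?thesis by simp
      next
        case False then have "T > 0" using T0 by simp
        then show ?thesis using g5 mult_le_cancel_left_pos by blast
      qed
      then have "T \<le> 4 * (a k)^2 / (\<gamma>^2 * \<mu>)" using mu_pos gamma by (subst pos_le_divide_eq) auto
      then show ?thesis using t1 unfolding T_def \<rho>_def by linarith
    qed
  qed
qed

lemma th_tendsto: "th \<longlonglongrightarrow> 0"
proof -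
  define c1 where "c1 = \<gamma> * min 1 (\<mu> / \<Lambda>)"
  define c2 where "c2 = \<gamma>^2 * \<mu>"
  have "(\<lambda>k. a k / c1 + 4 * (a k)^2 / c2) \<longlonglongrightarrow> 0 / c1 + 4 * 0^2 / c2"
    by (intro tendsto_intros a_tendsto) (use mu_pos Lam_pos gamma in \<open>auto simp: c1_def c2_def min_def split: if_splits\<close>)
  then have up: "(\<lambda>k. a k / c1 + 4 * (a k)^2 / c2) \<longlonglongrightarrow> 0" by simp
  have "(\<lambda>k. - th k) \<longlonglongrightarrow> 0"
    by (rule tendsto_sandwich[OF _ _ tendsto_const up])
       (use th_le0 th_small in \<open>auto simp: c1_def c2_def\<close>)
  from tendsto_minus[OF this] show ?thesis by simp
qed

lemma f_comp_tendsto: "i \<in> {1..m} \<Longrightarrow> X \<longlonglongrightarrow> p \<Longrightarrow> (\<lambda>j. f i (X j)) \<longlonglongrightarrow> f i p"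
  using f_cont[of i UNIV] by (simp add: continuous_on_tendsto_compose)

lemma key_lsc:
  assumes phi: "strict_mono \<phi>" and lim: "(x \<circ> \<phi>) \<longlonglongrightarrow> p" and i: "i \<in> {1..m}"
  shows "g i p \<le> ereal (L i - f i p)"
proof (rule ccontr)
  assume "\<not> ?thesis"
  then have "ereal (L i - f i p) < g i p" by simp
  then obtain c where c1: "ereal (L i - f i p) < ereal c" and c2: "ereal c < g i p"
    using ereal_dense2 by (metis ereal_dense2 less_ereal.simps(1))
  have ev1: "eventually (\<lambda>j. ereal c < g i ((x \<circ> \<phi>) j)) sequentially"
    by (rule lsc_seq[OF g_lsc[OF i] lim c2])
  have "(\<lambda>j. Phi i (\<phi> j) - f i ((x \<circ> \<phi>) j)) \<longlonglongrightarrow> L i - f i p"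
    by (intro tendsto_intros f_comp_tendsto[OF i lim] LIMSEQ_subseq_LIMSEQ[OF Llim[OF i] phi, unfolded o_def])
  then have ev2: "eventually (\<lambda>j. Phi i (\<phi> j) - f i ((x \<circ> \<phi>) j) < c) sequentially"
    using c1 by (intro order_tendstoD(2)) auto
  from ev1 ev2 have "eventually (\<lambda>j. False) sequentially"
  proof eventually_elim
    case (elim j)
    have "g i (x (\<phi> j)) = ereal (Phi i (\<phi> j) - f i (x (\<phi> j)))"
      unfolding g_eq[OF i, of "\<phi> j"] Phi_def by simp
    then show False using elim by simp
  qed
  then show False by simp
qed

lemma key_main:
  assumes phi: "strict_mono \<phi>" and lim: "(x \<circ> \<phi>) \<longlonglongrightarrow> p"
  shows "\<exists>i\<in>{1..m}. ereal (L i + \<mu> / 2 * ((y - p) \<bullet> (y - p))) \<le> ereal (f i y) + g i y"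
proof (rule ccontr)
  assume "\<not> ?thesis"
  then have lt: "\<And>i. i \<in> {1..m} \<Longrightarrow> ereal (f i y) + g i y < ereal (L i + \<mu> / 2 * ((y - p) \<bullet> (y - p)))"
    by (meson not_le)
  define W where "W = (y - p) \<bullet> (y - p)"
  define gy where "gy i = real_of_ereal (g i y)" for i
  have gy: "g i y = ereal (gy i)" if i: "i \<in> {1..m}" for i
    using lt[OF i] g_nminf[OF i, of y] unfolding gy_def by (cases "g i y") auto
  have marg: "0 < L i + \<mu> / 2 * W - f i y - gy i" if i: "i \<in> {1..m}" for i
    using lt[OF i] unfolding gy[OF i] W_def by simp
  define \<epsilon> where "\<epsilon> = Min ((\<lambda>i. L i + \<mu> / 2 * W - f i y - gy i) ` {1..m})"
  have eps0: "0 < \<epsilon>" unfolding \<epsilon>_def using m_pos marg by (subst Min_gr_iff) auto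
  have eps_le: "\<epsilon> \<le> L i + \<mu> / 2 * W - f i y - gy i" if i: "i \<in> {1..m}" for i
    unfolding \<epsilon>_def using i by (intro Min_le) auto
  define C where "C = \<Lambda> * (norm y + R)^2 + 1"
  have C0: "0 < C" unfolding C_def using Lam_pos by (simp add: add_nonneg_pos)
  define s where "s = min (1/2) (\<epsilon> / (2 * C))"
  have s0: "0 < s" "s \<le> 1" unfolding s_def using eps0 C0 by auto
  have sC: "s * C \<le> \<epsilon> / 2"
  proof -
    have "s \<le> \<epsilon> / (2 * C)" unfolding s_def by simp
    then show ?thesis using C0 by (simp add: field_simps)
  qed
  define B where "B k = s * (\<mu> / 2 * (W - (y - x k) \<bullet> (y - x k)) - \<epsilon>) + s * s * C / 2" for k
  have thB: "th k \<le> B k" for k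
  proof -
    define e where "e = s *\<^sub>R (y - x k)"
    have "\<theta> k \<le> newton_subobj m Df H g (x k) e" using theta_def d_min by simp
    also have "\<dots> \<le> ereal (B k)"
    proof (rule subobj_le)
      fix i assume i: "i \<in> {1..m}"
      have pt: "x k + e = (1 - s) *\<^sub>R x k + s *\<^sub>R y" unfolding e_def by (simp add: algebra_simps)
      have gle: "g i (x k + e) \<le> ereal ((1 - s) * G i k + s * gy i)"
        unfolding pt by (rule ereal_convex_real[OF g_convex[OF i] g_eq[OF i, of k] gy[OF i]]) (use s0 in auto)
      have "tm i (x k) e \<le> ereal (Df i (x k) \<bullet> e + ((1 - s) * G i k + s * gy i) - G i k + e \<bullet> (H i (x k) *v e) / 2)"
        by (rule tm_real_le[OF i g_eq[OF i, of k] gle])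
      also have "\<dots> \<le> ereal (B k)"
      proof -
        define Y where "Y = (y - x k) \<bullet> (y - x k)"
        define Q where "Q = (y - x k) \<bullet> (H i (x k) *v (y - x k))"
        define D where "D = Df i (x k) \<bullet> (y - x k)"
        have De: "Df i (x k) \<bullet> e = s * D" unfolding e_def D_def by (simp add: inner_scaleR_right)
        have Qe: "e \<bullet> (H i (x k) *v e) = s * s * Q" unfolding e_def Q_def
          by (simp add: matrix_vector_mult_scaleR inner_scaleR_left inner_scaleR_right)
        have sf: "f i (x k) + D + \<mu> / 2 * Y \<le> f i y"
          using strong_first_order[OF i, of "x k" y] unfolding D_def Y_def .
        have xin: "x k \<in> cball 0 (R + 1)" using xR[of k] by simp
        have QY: "Q \<le> \<Lambda> * Y" unfolding Q_def Y_def by (rule Hb[OF i xin])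
        have Yb: "Y \<le> (norm y + R)^2"
        proof -
          have "norm (y - x k) \<le> norm y + R" using norm_triangle_ineq4[of y "x k"] xR[of k] by linarith
          then have "(norm (y - x k))^2 \<le> (norm y + R)^2" by (intro power_mono) auto
          then show ?thesis unfolding Y_def by (simp add: dot_square_norm)
        qed
        have QC: "Q \<le> C" using QY Yb Lam_pos mult_left_mono[OF Yb, of \<Lambda>] unfolding C_def by linarith
        have ssQ: "s * s * Q \<le> s * s * C" using QC s0 by (intro mult_left_mono) auto
        have PL: "L i \<le> f i (x k) + G i k" using Lle[OF i, of k] unfolding Phi_def .
        have E: "f i y + gy i \<le> L i + \<mu> / 2 * W - \<epsilon>" using eps_le[OF i] by linarith
        have inner_ineq: "D + gy i - G i k \<le> \<mu> / 2 * (W - Y) - \<epsilon>"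
          using sf PL E by (simp add: algebra_simps)
        have "s * (D + gy i - G i k) \<le> s * (\<mu> / 2 * (W - Y) - \<epsilon>)"
          using inner_ineq s0 by (intro mult_left_mono) auto
        moreover have "Df i (x k) \<bullet> e + ((1 - s) * G i k + s * gy i) - G i k + e \<bullet> (H i (x k) *v e) / 2
            = s * (D + gy i - G i k) + s * s * Q / 2"
          unfolding De Qe by (simp add: algebra_simps)
        moreover have "B k = s * (\<mu> / 2 * (W - Y) - \<epsilon>) + s * s * C / 2" unfolding B_def Y_def ..
        ultimately have "Df i (x k) \<bullet> e + ((1 - s) * G i k + s * gy i) - G i k + e \<bullet> (H i (x k) *v e) / 2 \<le> B k"
          using ssQ by linarith
        then show ?thesis by simp
      qed
      finally show "tm i (x k) e \<le> ereal (B k)" .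
    qed
    finally show ?thesis unfolding theta_eq[of k] by simp
  qed
  have lim1: "(\<lambda>j. B (\<phi> j)) \<longlonglongrightarrow> s * (\<mu> / 2 * (W - W) - \<epsilon>) + s * s * C / 2"
  proof -
    have lim': "(\<lambda>j. x (\<phi> j)) \<longlonglongrightarrow> p" using lim unfolding o_def .
    show ?thesis unfolding B_def W_def by (intro tendsto_intros lim')
  qed
  have lim0: "(\<lambda>j. th (\<phi> j)) \<longlonglongrightarrow> 0"
    using LIMSEQ_subseq_LIMSEQ[OF th_tendsto phi] by (simp add: o_def)
  have "0 \<le> s * (\<mu> / 2 * (W - W) - \<epsilon>) + s * s * C / 2"
    by (rule LIMSEQ_le[OF lim0 lim1]) (use thB in blast)
  moreover have "s * s * C \<le> s * (\<epsilon> / 2)" using sC s0 mult_left_mono[OF sC, of s] by (simp add: mult.assoc)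
  moreover have "0 < s * \<epsilon>" using s0 eps0 by simp
  ultimately show False by (simp add: algebra_simps)
qed

lemma W_zero:
  assumes phi: "strict_mono \<phi>" and lim: "(x \<circ> \<phi>) \<longlonglongrightarrow> p" and i: "i \<in> {1..m}"
    and le1: "ereal (L i + \<mu> / 2 * ((y - p) \<bullet> (y - p))) \<le> ereal (f i y) + g i y"
    and le2: "ereal (f i y) + g i y \<le> ereal (L i)"
  shows "y = p"
proof -
  have "L i + \<mu> / 2 * ((y - p) \<bullet> (y - p)) \<le> L i" using order_trans[OF le1 le2] by simp
  then have "\<mu> / 2 * ((y - p) \<bullet> (y - p)) \<le> 0" by simp
  then have "(y - p) \<bullet> (y - p) \<le> 0" using mu_pos by (simp add: mult_le_0_iff)
  then show ?thesis by (metis inner_eq_zero_iff eq_iff_diff_eq_0 inner_ge_zero order_antisym)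
qed

lemma F_le_L:
  assumes phi: "strict_mono \<phi>" and lim: "(x \<circ> \<phi>) \<longlonglongrightarrow> p" and i: "i \<in> {1..m}"
  shows "ereal (f i p) + g i p \<le> ereal (L i)"
proof -
  have "ereal (f i p) + g i p \<le> ereal (f i p) + ereal (L i - f i p)"
    by (rule add_left_mono[OF key_lsc[OF phi lim i]])
  then show ?thesis by simp
qed

lemma limit_unique:
  assumes "strict_mono \<phi>" "(x \<circ> \<phi>) \<longlonglongrightarrow> p" "strict_mono \<psi>" "(x \<circ> \<psi>) \<longlonglongrightarrow> q"
  shows "q = p"
proof -
  obtain i where i: "i \<in> {1..m}" and le1: "ereal (L i + \<mu> / 2 * ((q - p) \<bullet> (q - p))) \<le> ereal (f i q) + g i q"
    using key_main[OF assms(1,2), of q] by blast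
  show ?thesis by (rule W_zero[OF assms(1,2) i le1 F_le_L[OF assms(3,4) i]])
qed

lemma x_bounded: "bounded (range x)"
  unfolding bounded_iff using xR by blast

lemma converges: "\<exists>p \<phi>. strict_mono \<phi> \<and> (x \<circ> \<phi>) \<longlonglongrightarrow> p \<and> x \<longlonglongrightarrow> p"
proof -
  obtain p \<phi> where phi: "strict_mono \<phi>" "(x \<circ> \<phi>) \<longlonglongrightarrow> p"
    using bounded_imp_convergent_subsequence[OF x_bounded] by blast
  have "x \<longlonglongrightarrow> p"
  proof (rule ccontr)
    assume "\<not> x \<longlonglongrightarrow> p"
    then have nc: "\<not> (\<forall>r>0. \<exists>no. \<forall>n\<ge>no. dist (x n) p < r)" unfolding lim_sequentially .
    then have "\<exists>e>0. \<forall>N. \<exists>n\<ge>N. e \<le> dist (x n) p" by (simp add: not_less)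
    then obtain e where e: "e > 0" "\<forall>N. \<exists>n\<ge>N. e \<le> dist (x n) p" by blast
    define S where "S = {n. e \<le> dist (x n) p}"
    have inf: "infinite S" unfolding S_def infinite_nat_iff_unbounded_le using e(2) by simp
    obtain \<psi> :: "nat \<Rightarrow> nat" where psi: "strict_mono \<psi>" "\<And>n. \<psi> n \<in> S" using infinite_enumerate[OF inf] by blast
    have bd: "bounded (range (x \<circ> \<psi>))" using xR unfolding bounded_iff by auto
    obtain q \<rho> where rho: "strict_mono \<rho>" "((x \<circ> \<psi>) \<circ> \<rho>) \<longlonglongrightarrow> q"
      using bounded_imp_convergent_subsequence[of "x \<circ> \<psi>"] bd by blast
    have sm: "strict_mono (\<psi> \<circ> \<rho>)" using psi(1) rho(1) by (rule strict_mono_o)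
    have lq: "(x \<circ> (\<psi> \<circ> \<rho>)) \<longlonglongrightarrow> q" using rho(2) by (simp only: comp_assoc)
    have qp: "q = p" by (rule limit_unique[OF phi sm lq])
    have dl: "(\<lambda>j. dist ((x \<circ> (\<psi> \<circ> \<rho>)) j) p) \<longlonglongrightarrow> dist q p"
      by (intro tendsto_intros lq)
    have de: "\<forall>j. e \<le> dist ((x \<circ> (\<psi> \<circ> \<rho>)) j) p" using psi(2) unfolding S_def by simp
    have "e \<le> dist q p" by (rule LIMSEQ_le_const[OF dl]) (use de in blast)
    then show False using qp e(1) by simp
  qed
  then show ?thesis using phi by blast
qed

lemma main: "\<exists>xs. x \<longlonglongrightarrow> xs \<and> pareto_solution m (\<lambda>i y. ereal (f i y) + g i y) xs"
proof -
  obtain p \<phi> where phi: "strict_mono \<phi>" "(x \<circ> \<phi>) \<longlonglongrightarrow> p" and lim: "x \<longlonglongrightarrow> p"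
    using converges by blast
  have "pareto_solution m (\<lambda>i y. ereal (f i y) + g i y) p"
    unfolding pareto_solution_def
  proof
    assume "\<exists>y. (\<forall>i\<in>{1..m}. ereal (f i y) + g i y \<le> ereal (f i p) + g i p) \<and>
               (\<exists>i\<in>{1..m}. ereal (f i y) + g i y \<noteq> ereal (f i p) + g i p)"
    then obtain y where le: "\<forall>i\<in>{1..m}. ereal (f i y) + g i y \<le> ereal (f i p) + g i p"
      and ne: "\<exists>i\<in>{1..m}. ereal (f i y) + g i y \<noteq> ereal (f i p) + g i p" by blast
    obtain i where i: "i \<in> {1..m}" and le1: "ereal (L i + \<mu> / 2 * ((y - p) \<bullet> (y - p))) \<le> ereal (f i y) + g i y"
      using key_main[OF phi] by blast
    have le2: "ereal (f i y) + g i y \<le> ereal (L i)"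
      using order_trans[OF bspec[OF le i] F_le_L[OF phi i]] .
    have "y = p" by (rule W_zero[OF phi i le1 le2])
    then show False using ne by simp
  qed
  then show ?thesis using lim by blast
qed

end

lemma (in nt) final: "\<exists>xs. x \<longlonglongrightarrow> xs \<and> pareto_solution m (\<lambda>i y. ereal (f i y) + g i y) xs"
proof -
  obtain R \<Lambda> where RL: "0 \<le> R" "0 < \<Lambda>" "\<forall>k. norm (x k) \<le> R"
     "\<forall>i\<in>{1..m}. \<forall>z\<in>cball 0 (R + 1). \<forall>v. v \<bullet> (H i z *v v) \<le> \<Lambda> * (v \<bullet> v)"
    using consts_exist by blast
  have "\<forall>i\<in>{1..m}. \<exists>Lv. (\<lambda>k. Phi i k) \<longlonglongrightarrow> Lv \<and> (\<forall>k. Lv \<le> Phi i k)" using lim_exist by blast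
  then obtain Lf where Lf: "\<And>i. i \<in> {1..m} \<Longrightarrow> (\<lambda>k. Phi i k) \<longlonglongrightarrow> Lf i \<and> (\<forall>k. Lf i \<le> Phi i k)"
    by metis
  interpret n2: nt2 m f Df H g \<mu> \<sigma> \<gamma> x d \<theta> t R \<Lambda> Lf
  proof (rule nt2.intro[OF nt_axioms], unfold_locales)
    show "0 \<le> R" by (rule RL(1))
    show "0 < \<Lambda>" by (rule RL(2))
    show "\<And>k. norm (x k) \<le> R" using RL(3) by blast
    show "\<And>i z v. i \<in> {1..m} \<Longrightarrow> z \<in> cball 0 (R + 1) \<Longrightarrow> v \<bullet> (H i z *v v) \<le> \<Lambda> * (v \<bullet> v)"
      using RL(4) by blast
    show "\<And>i. i \<in> {1..m} \<Longrightarrow> (\<lambda>k. Phi i k) \<longlonglongrightarrow> Lf i" using Lf by blast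
    show "\<And>i k. i \<in> {1..m} \<Longrightarrow> Lf i \<le> Phi i k" using Lf by blast
  qed
  show ?thesis by (rule n2.main)
qed

context nt2 begin

end

theorem theorem2:
  fixes m :: nat
    and f :: "nat \<Rightarrow> real^'n \<Rightarrow> real"
    and Df :: "nat \<Rightarrow> real^'n \<Rightarrow> real^'n"
    and H :: "nat \<Rightarrow> real^'n \<Rightarrow> real^'n^'n"
    and g :: "nat \<Rightarrow> real^'n \<Rightarrow> ereal"
    and \<mu> \<sigma> \<gamma> :: real
    and x d :: "nat \<Rightarrow> real^'n"
    and \<theta> :: "nat \<Rightarrow> ereal"
    and t :: "nat \<Rightarrow> real"
  assumes m_pos: "0 < m"
    and grad: "\<And>i y. i \<in> {1..m} \<Longrightarrow> (f i has_derivative (\<lambda>h. Df i y \<bullet> h)) (at y)"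
    and hess: "\<And>i y. i \<in> {1..m} \<Longrightarrow> (Df i has_derivative (\<lambda>h. H i y *v h)) (at y)"
    and hess_cont: "\<And>i. i \<in> {1..m} \<Longrightarrow> continuous_on UNIV (H i)"
    and g_proper: "\<And>i. i \<in> {1..m} \<Longrightarrow> proper_fun (g i)"
    and g_convex: "\<And>i. i \<in> {1..m} \<Longrightarrow> ereal_convex_fun (g i)"
    and g_lsc: "\<And>i. i \<in> {1..m} \<Longrightarrow> lsc_fun (g i)"
    and mu_pos: "0 < \<mu>"
    and strong: "\<And>i y v. i \<in> {1..m} \<Longrightarrow> \<mu> * (v \<bullet> v) \<le> v \<bullet> (H i y *v v)"
    and sigma: "0 < \<sigma>" "\<sigma> < 1"
    and gamma: "0 < \<gamma>" "\<gamma> < 1"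
    and x0_dom: "\<And>i. i \<in> {1..m} \<Longrightarrow> g i (x 0) \<noteq> \<infinity>"
    and d_min: "\<And>k e. newton_subobj m Df H g (x k) (d k) \<le> newton_subobj m Df H g (x k) e"
    and theta_def: "\<And>k. \<theta> k = newton_subobj m Df H g (x k) (d k)"
    and t_mem: "\<And>k. \<exists>j. t k = \<gamma> ^ j \<and>
        (\<forall>i\<in>{1..m}. (ereal (f i (x k + \<gamma> ^ j *\<^sub>R d k)) + g i (x k + \<gamma> ^ j *\<^sub>R d k))
                      - (ereal (f i (x k)) + g i (x k)) \<le> ereal (\<gamma> ^ j * \<sigma>) * \<theta> k)"
    and t_max: "\<And>k j. (\<forall>i\<in>{1..m}. (ereal (f i (x k + \<gamma> ^ j *\<^sub>R d k)) + g i (x k + \<gamma> ^ j *\<^sub>R d k))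
                      - (ereal (f i (x k)) + g i (x k)) \<le> ereal (\<gamma> ^ j * \<sigma>) * \<theta> k)
                 \<Longrightarrow> \<gamma> ^ j \<le> t k"
    and x_step: "\<And>k. x (Suc k) = x k + t k *\<^sub>R d k"
    and d_nonzero: "\<And>k. d k \<noteq> 0"
  shows "\<exists>xs. x \<longlonglongrightarrow> xs \<and>
           pareto_solution m (\<lambda>i y. ereal (f i y) + g i y) xs"
proof -
  interpret nt m f Df H g \<mu> \<sigma> \<gamma> x d \<theta> t
    by (rule nt.intro[OF m_pos grad hess hess_cont g_proper g_convex g_lsc mu_pos strong sigma gamma
          x0_dom d_min theta_def t_mem t_max x_step])
  show ?thesis by (rule final)
qed

end
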